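(* Consider two-value instances, i.e. instances in which every interval has length either $k/\Delta$ (short) or $k$ (long). Let $\textsc{Alg}$ be any deterministic online algorithm that receives the full prediction $\hat{\mathbf{I}}$. If there is $\epsilon>0$ such that for every two-value instance $\mathcal{I}$ and every prediction, $|\textsc{Opt}(\mathcal{I})| \le \Delta\cdot|\textsc{Alg}(\mathcal{I})| + \frac{k}{\Delta} - \epsilon$, then there is a two-value instance $\mathcal{I}$ whose prediction $\hat{\mathbf{I}}$ is accurate and on which $|\textsc{Opt}(\mathcal{I})| \ge \Delta\cdot|\textsc{Alg}(\mathcal{I})|$; that is, $\textsc{Alg}$ cannot be better than $\Delta$-consistent.
   Context: Online interval scheduling: intervals $I_j$ with release time $r_j$, deadline $d_j$, length $l_j=d_j-r_j$ arrive online in non-decreasing order of release time; each must be irrevocably accepted or rejected upon arrival; accepted intervals must be pairwise non-overlapping; objective: maximize the total accepted length $|\cdot|$. $\textsc{Opt}(\mathcal{I})$ is an optimal offline solution. $k=\max_j l_j$, $\Delta=k/\min_j l_j$. The full prediction $\hat{\mathbf{I}}=\{(\hat r_1,\hat d_1),\dots,(\hat r_n,\hat d_n)\}$ gives a predicted release time and deadline for every interval and is available to the algorithm in advance; it is accurate if it coincides with the actual instance. An algorithm is $\alpha$-consistent if $|\textsc{Opt}(\mathcal{I})|\le\alpha|\textsc{Alg}(\mathcal{I})|$ on all instances with accurate predictions. *)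

theory Defs
  imports Complex_Main
begin

text \<open>An interval is a pair (release time, deadline). Instances and predictions
are lists of intervals; instances are presented in order of release time.\<close>

type_synonym interval = "real \<times> real"

definition iv_len :: "interval \<Rightarrow> real" where
  "iv_len iv = snd iv - fst iv"

definition iv_disjoint :: "interval \<Rightarrow> interval \<Rightarrow> bool" where
  "iv_disjoint a b \<longleftrightarrow> snd a \<le> fst b \<or> snd b \<le> fst a"

definition feasible :: "interval list \<Rightarrow> nat set \<Rightarrow> bool" where
  "feasible I S \<longleftrightarrow> S \<subseteq> {..<length I} \<and>
     (\<forall>i\<in>S. \<forall>j\<in>S. i \<noteq> j \<longrightarrow> iv_disjoint (I ! i) (I ! j))"

definition opt_val :: "interval list \<Rightarrow> real" where
  "opt_val I = Max ((\<lambda>S. \<Sum>i\<in>S. iv_len (I ! i)) ` {S. feasible I S})"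

text \<open>A deterministic online algorithm with full prediction: given the prediction
and the prefix of the instance revealed so far (whose last element is the current
interval), it decides whether to accept the current interval. An acceptance of an
interval overlapping a previously accepted one is not executed (so the algorithm
is always feasible; equivalently, we range over all feasible algorithms).\<close>
type_synonym online_alg = "interval list \<Rightarrow> interval list \<Rightarrow> bool"

fun alg_acc :: "online_alg \<Rightarrow> interval list \<Rightarrow> interval list \<Rightarrow> nat \<Rightarrow> nat set" where
  "alg_acc A P I 0 = {}"
| "alg_acc A P I (Suc j) =
     (let S = alg_acc A P I j in
      if A P (take (Suc j) I) \<and> (\<forall>i\<in>S. iv_disjoint (I ! i) (I ! j))
      then insert j S else S)"

definition alg_val :: "online_alg \<Rightarrow> interval list \<Rightarrow> interval list \<Rightarrow> real" where
  "alg_val A P I = (\<Sum>i\<in>alg_acc A P I (length I). iv_len (I ! i))"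

definition two_value :: "real \<Rightarrow> real \<Rightarrow> interval list \<Rightarrow> bool" where
  "two_value k \<Delta> I \<longleftrightarrow> sorted (map fst I) \<and>
     (\<forall>iv\<in>set I. iv_len iv = k / \<Delta> \<or> iv_len iv = k)"

end

theory Submission
  imports Defs
begin

lemma opt_ge:
  assumes "feasible I S"
  shows "(\<Sum>i\<in>S. iv_len (I ! i)) \<le> opt_val I"
proof -
  have "{S. feasible I S} \<subseteq> Pow {..<length I}" by (auto simp: feasible_def)
  then have "finite {S. feasible I S}" by (meson finite_Pow_iff finite_lessThan finite_subset)
  then show ?thesis unfolding opt_val_def using assms by (intro Max_ge) auto
qed

theorem mainTheorem4:
  fixes k \<Delta> :: real and A :: online_alg
  assumes "k > 0" and "\<Delta> \<ge> 1"
    and "\<exists>\<epsilon>>0. \<forall>I P. two_value k \<Delta> I \<longrightarrow>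
            opt_val I \<le> \<Delta> * alg_val A P I + k / \<Delta> - \<epsilon>"
  shows "\<exists>I. two_value k \<Delta> I \<and> I \<noteq> [] \<and> opt_val I \<ge> \<Delta> * alg_val A I I"
proof -
  obtain \<epsilon> where e: "\<epsilon> > 0" and H: "\<And>I P. two_value k \<Delta> I \<Longrightarrow>
            opt_val I \<le> \<Delta> * alg_val A P I + k / \<Delta> - \<epsilon>" using assms(3) by blast
  define s where "s = k / \<Delta>"
  have s: "s > 0" using assms unfolding s_def by simp
  have ds: "\<Delta> * s = k" using assms unfolding s_def by simp
  define I2 where "I2 = [(0, s), (s/2, s/2 + k)]"
  have tv2: "two_value k \<Delta> I2" using s unfolding I2_def two_value_def iv_len_def s_def by auto
  show ?thesis
  proof (cases "A I2 [(0, s)]")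
    case True
    have acc1: "alg_acc A I2 I2 1 = {0}" using True by (simp add: I2_def)
    have acc2: "alg_acc A I2 I2 2 = {0}" using acc1 s assms(1)
      by (simp add: numeral_2_eq_2 Let_def I2_def iv_disjoint_def)
    have l2: "length I2 = 2" by (simp add: I2_def)
    have "alg_val A I2 I2 = s" unfolding alg_val_def l2 acc2
      by (simp add: I2_def iv_len_def)
    moreover have "feasible I2 {1}" by (simp add: feasible_def I2_def)
    from opt_ge[OF this] have "k \<le> opt_val I2" by (simp add: I2_def iv_len_def)
    ultimately show ?thesis using tv2 ds by (auto simp: I2_def)
  next
    case False
    define I1 :: "interval list" where "I1 = [(0, s)]"
    have tv1: "two_value k \<Delta> I1" using s unfolding I1_def two_value_def iv_len_def s_def by auto
    have "alg_acc A I2 I1 1 = {}" using False by (simp add: I1_def)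
    then have "alg_val A I2 I1 = 0" by (simp add: alg_val_def I1_def)
    moreover have "feasible I1 {0}" by (simp add: feasible_def I1_def)
    from opt_ge[OF this] have "s \<le> opt_val I1" by (simp add: I1_def iv_len_def)
    ultimately have False using H[OF tv1, of I2] e s_def by simp
    then show ?thesis ..
  qed
qed

end
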